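(* Let $\mathcal{D}$ be a set of routing problem instances, and for each $\mathcal{P}\in\mathcal{D}$ let $C=C(\mathcal{P})\subseteq\Pi$ be its (finite, nonempty) feasible set, $f(\cdot;\mathcal{P})$ its objective, $f^*(\mathcal{P})=\min_{\pi\in C}f(\pi;\mathcal{P})$, $\Pi^*=\Pi^*(\mathcal{P})$ its set of optimal solutions, and $q_\lambda(\cdot;\mathcal{P})$ the constrained Gibbs distribution defined in the context. Suppose that for a parameterized family of distributions $\{p_\theta(\cdot;\mathcal{P})\}_\theta$ on $\Pi$ the approximation error $\delta(\lambda):=\min_\theta\max_{\mathcal{P}\in\mathcal{D}}\mathrm{KL}(p_\theta(\cdot;\mathcal{P})\,\|\,q_\lambda(\cdot;\mathcal{P}))$ satisfies $\delta(\lambda)\le c/\lambda$ for all $\lambda>0$, for some constant $c$, and let $\theta^*(\lambda)$ be a minimizer attaining $\delta(\lambda)$. Define $\Delta(\mathcal{P}):=\min_{\pi\in C\setminus\Pi^*}f(\pi;\mathcal{P})-f^*(\mathcal{P})$. Then for any $\mathcal{P}\in\mathcal{D}$, any $\epsilon>0$ and any $\lambda$ with $\Delta(\mathcal{P})\ge\lambda>0$, $$\mathbb{P}_{\pi\sim p_{\theta^*(\lambda)}(\cdot;\mathcal{P})}\big(f(\pi;\mathcal{P})\ge f^*(\mathcal{P})+\epsilon\big)\le \frac{|C|\,\Delta(\mathcal{P})\,e^{-\Delta(\mathcal{P})/\lambda}}{|\Pi^*|\max\{\epsilon,\Delta(\mathcal{P})\}}+\sqrt{\frac{c}{2\lamb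da}}.$$
   Context: Routes are elements of the finite set $\Pi=V^T$ with $V=\{0,1,\dots,n\}$. For an instance $\mathcal{P}$, the feasible set is $C=\{\pi\in\Pi: c(\pi;\mathcal{P})\le 0,\ d(\pi;\mathcal{P})=0\}$ for constraint functions $c,d$. The constrained Gibbs distribution with temperature $\lambda>0$ is $q_\lambda(\pi;\mathcal{P})=\frac{1}{Z_\lambda}\exp\!\big(-\frac{f(\pi;\mathcal{P})-f^*(\mathcal{P})}{\lambda}\big)\mathbf{1}_C(\pi)$, where $Z_\lambda=\sum_{\pi\in C}\exp(-(f(\pi;\mathcal{P})-f^*(\mathcal{P}))/\lambda)$. For distributions $P,Q$ on a finite set with $\mathrm{supp}(P)\subseteq\mathrm{supp}(Q)$, $\mathrm{KL}(P\|Q)=\mathbb{E}_{x\sim P}[\log(P(x)/Q(x))]$. *)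

theory Defs
  imports Complex_Main "HOL-Library.Extended_Real"
begin

text \<open>Routes: elements of V^T with V = {0..n}, represented as lists of length T.\<close>
definition routes :: "nat \<Rightarrow> nat \<Rightarrow> nat list set" where
  "routes n T = {xs. length xs = T \<and> set xs \<subseteq> {0..n}}"

definition fstar :: "('r \<Rightarrow> real) \<Rightarrow> 'r set \<Rightarrow> real" where
  "fstar f C = Min (f ` C)"

definition optset :: "('r \<Rightarrow> real) \<Rightarrow> 'r set \<Rightarrow> 'r set" where
  "optset f C = {x \<in> C. f x = fstar f C}"

definition gap :: "('r \<Rightarrow> real) \<Rightarrow> 'r set \<Rightarrow> real" where
  "gap f C = Min (f ` (C - optset f C)) - fstar f C"

definition gibbs :: "real \<Rightarrow> ('r \<Rightarrow> real) \<Rightarrow> 'r set \<Rightarrow> 'r \<Rightarrow> real" where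
  "gibbs lam f C x =
     (if x \<in> C then exp (- (f x - fstar f C) / lam) /
        (\<Sum>y\<in>C. exp (- (f y - fstar f C) / lam)) else 0)"

definition is_distr :: "'r set \<Rightarrow> ('r \<Rightarrow> real) \<Rightarrow> bool" where
  "is_distr S p \<longleftrightarrow> (\<forall>x\<in>S. 0 \<le> p x) \<and> (\<Sum>x\<in>S. p x) = 1"

definition KL :: "'r set \<Rightarrow> ('r \<Rightarrow> real) \<Rightarrow> ('r \<Rightarrow> real) \<Rightarrow> ereal" where
  "KL S P Q =
     (if \<forall>x\<in>S. P x \<noteq> 0 \<longrightarrow> Q x \<noteq> 0
      then ereal (\<Sum>x\<in>{x\<in>S. P x \<noteq> 0}. P x * ln (P x / Q x))
      else \<infinity>)"

end

theory Submission
  imports Defs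
begin

lemma L1:
  fixes t :: real assumes "0 \<le> t" "t < 1"
  shows "2 * t^2 \<le> - ln (1 - t)"
proof -
  let ?k = "\<lambda>s::real. - ln (1 - s) - 2 * s^2"
  have "?k 0 \<le> ?k t"
  proof (rule DERIV_nonneg_imp_nondecreasing[OF assms(1)])
    fix x :: real assume x: "0 \<le> x" "x \<le> t"
    hence x1: "x < 1" using assms by simp
    have "DERIV ?k x :> (1 / (1 - x) - 4 * x)"
      by (rule derivative_eq_intros refl | use x1 in simp)+
    moreover have "1 / (1 - x) - 4 * x \<ge> 0"
    proof -
      have "0 \<le> (2*x-1)^2" by simp
      hence "4 * x * (1 - x) \<le> 1" by (simp add: power2_eq_square algebra_simps)
      hence "4 * x \<le> 1 / (1 - x)" using x1 by (simp add: field_simps)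
      thus ?thesis by simp
    qed
    ultimately show "\<exists>y. DERIV ?k x :> y \<and> y \<ge> 0" by blast
  qed
  thus ?thesis by simp
qed

lemma inv_ge4:
  fixes s :: real assumes "0 < s" "s < 1" shows "4 \<le> 1 / (s * (1 - s))"
proof -
  have "0 \<le> (2*s-1)^2" by simp
  hence "4 * s * (1 - s) \<le> 1" by (simp add: power2_eq_square algebra_simps)
  moreover have "0 < s * (1 - s)" using assms by simp
  ultimately show ?thesis by (simp add: field_simps)
qed

lemma L2:
  fixes a t :: real assumes a: "0 < a" "a < 1" and t: "0 < t" "t < 1"
  shows "- a * ln a - (1 - a) * ln (1 - a) - 2 * (a - a)^2
     \<le> - a * ln t - (1 - a) * ln (1 - t) - 2 * (a - t)^2"
proof -
  let ?H = "\<lambda>s::real. - a * ln s - (1 - a) * ln (1 - s) - 2 * (a - s)^2"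
  have D: "DERIV ?H s :> (s - a) * (1 / (s * (1 - s)) - 4)" if s: "0 < s" "s < 1" for s
  proof -
    have "DERIV ?H s :> (- a * (1 / s) - (1 - a) * (- 1 / (1 - s)) - 2 * (2 * (a - s) * (- 1)))"
      by (rule derivative_eq_intros refl | use s in simp)+
    moreover have "(- a * (1 / s) - (1 - a) * (- 1 / (1 - s)) - 2 * (2 * (a - s) * (- 1)))
       = (s - a) * (1 / (s * (1 - s)) - 4)"
      using s by (simp add: field_simps)
    ultimately show ?thesis by simp
  qed
  show ?thesis
  proof (cases "a \<le> t")
    case True
    show ?thesis
    proof (rule DERIV_nonneg_imp_nondecreasing[OF True])
      fix x assume x: "a \<le> x" "x \<le> t"
      hence "0 < x" "x < 1" using a t by auto
      thus "\<exists>y. DERIV ?H x :> y \<and> y \<ge> 0"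
        using D[of x] inv_ge4[of x] x by (intro exI[of _ "(x - a) * (1 / (x * (1 - x)) - 4)"]) simp
    qed
  next
    case False
    hence ta: "t \<le> a" by simp
    show ?thesis
    proof (rule DERIV_nonpos_imp_nonincreasing[OF ta])
      fix x assume x: "t \<le> x" "x \<le> a"
      hence "0 < x" "x < 1" using a t by auto
      thus "\<exists>y. DERIV ?H x :> y \<and> y \<le> 0"
        using D[of x] inv_ge4[of x] x
        by (intro exI[of _ "(x - a) * (1 / (x * (1 - x)) - 4)"]) (simp add: mult_nonpos_nonneg)
    qed
  qed
qed

lemma binpinsker:
  fixes a b :: real
  assumes "0 \<le> a" "a \<le> 1" "0 \<le> b" "b \<le> 1" "a > 0 \<Longrightarrow> b > 0" "a < 1 \<Longrightarrow> b < 1"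
  shows "2 * (a - b)^2 \<le> a * ln (a / b) + (1 - a) * ln ((1 - a) / (1 - b))"
proof -
  consider "a = 0" | "a = 1" | "0 < a \<and> a < 1" using assms by linarith
  thus ?thesis
  proof cases
    case 1
    hence "b < 1" using assms by simp
    thus ?thesis using L1[of b] 1 assms by (simp add: ln_div)
  next
    case 2
    hence b: "b > 0" using assms by simp
    have "2 * (1 - b)^2 \<le> - ln (1 - (1 - b))" using L1[of "1 - b"] b assms by simp
    thus ?thesis using 2 b by (simp add: ln_div power2_commute)
  next
    case 3
    hence b: "0 < b" "b < 1" using assms by auto
    have e1: "ln (a / b) = ln a - ln b" using 3 b by (simp add: ln_div)
    have e2: "ln ((1 - a) / (1 - b)) = ln (1 - a) - ln (1 - b)" using 3 b by (simp add: ln_div)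
    show ?thesis unfolding e1 e2 using L2[of a b] 3 b by (simp add: algebra_simps)
  qed
qed

lemma logsum:
  fixes pp qq :: "'a \<Rightarrow> real"
  assumes fin: "finite B" and nn: "\<And>x. x \<in> B \<Longrightarrow> 0 \<le> pp x" "\<And>x. x \<in> B \<Longrightarrow> 0 \<le> qq x"
    and supp: "\<And>x. x \<in> B \<Longrightarrow> pp x \<noteq> 0 \<Longrightarrow> qq x \<noteq> 0"
  shows "(\<Sum>x\<in>B. pp x) * ln ((\<Sum>x\<in>B. pp x) / (\<Sum>x\<in>B. qq x))
     \<le> (\<Sum>x\<in>{x\<in>B. pp x \<noteq> 0}. pp x * ln (pp x / qq x))"
proof -
  define a where "a = (\<Sum>x\<in>B. pp x)"
  define b where "b = (\<Sum>x\<in>B. qq x)"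
  let ?B = "{x\<in>B. pp x \<noteq> 0}"
  have aB: "a = (\<Sum>x\<in>?B. pp x)" unfolding a_def using fin by (intro sum.mono_neutral_right) auto
  have bB: "(\<Sum>x\<in>?B. qq x) \<le> b" unfolding b_def using fin nn by (intro sum_mono2) auto
  show ?thesis
  proof (cases "?B = {}")
    case True
    thus ?thesis using aB a_def by simp
  next
    case False
    then obtain x0 where x0: "x0 \<in> B" "pp x0 \<noteq> 0" by auto
    have "0 < pp x0" using x0 nn by force
    have apos: "0 < a" unfolding aB using fin False nn by (intro sum_pos) force+
    have "0 < qq x0" using x0 nn supp by force
    moreover have "qq x0 \<le> b" unfolding b_def using fin x0 nn by (intro member_le_sum) auto
    ultimately have bpos: "0 < b" by simp
    have tm: "pp x - qq x * a / b \<le> pp x * ln (pp x / qq x) - pp x * ln (a / b)" if x: "x \<in> ?B" for x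
    proof -
      have px: "0 < pp x" using x nn by force
      have qx: "0 < qq x" using x nn supp by force
      define u where "u = pp x * b / (qq x * a)"
      have upos: "0 < u" unfolding u_def using px qx apos bpos by simp
      have "ln (pp x / qq x) - ln (a / b) = ln u"
        unfolding u_def using px qx apos bpos by (simp add: ln_div ln_mult)
      moreover have "ln (1 / u) \<le> 1 / u - 1" using upos by (intro ln_le_minus_one) simp
      hence "1 - 1 / u \<le> ln u" using upos by (simp add: ln_div)
      hence "pp x * (1 - 1 / u) \<le> pp x * ln u" using px by (intro mult_left_mono) auto
      moreover have "pp x * (1 - 1 / u) = pp x - qq x * a / b"
        unfolding u_def using px qx apos bpos by (simp add: field_simps)
      ultimately show ?thesis by (simp add: algebra_simps)
    qed
    have "a - (\<Sum>x\<in>?B. qq x) * a / b \<le> (\<Sum>x\<in>?B. pp x * ln (pp x / qq x)) - a * ln (a / b)"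
    proof -
      have "(\<Sum>x\<in>?B. pp x - qq x * a / b) \<le> (\<Sum>x\<in>?B. pp x * ln (pp x / qq x) - pp x * ln (a / b))"
        using tm by (rule sum_mono)
      thus ?thesis by (simp add: sum_subtractf sum_divide_distrib[symmetric] sum_distrib_right[symmetric] aB)
    qed
    moreover have "(\<Sum>x\<in>?B. qq x) * a / b \<le> a"
      using bB apos bpos by (simp add: field_simps)
    ultimately show ?thesis by (simp add: a_def[symmetric] b_def[symmetric])
  qed
qed

lemma L3:
  fixes l x y :: real assumes "0 < l" "l \<le> x" "x \<le> y"
  shows "y * exp (- y / l) \<le> x * exp (- x / l)"
proof -
  have xp: "0 < x" using assms by simp
  have "y / x = 1 + (y - x) / x" using xp by (simp add: field_simps)
  also have "\<dots> \<le> exp ((y - x) / x)" by (rule exp_ge_add_one_self)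
  also have "\<dots> \<le> exp ((y - x) / l)" using assms xp
    by (simp add: divide_left_mono)
  finally have "y \<le> x * exp ((y - x) / l)" using xp by (simp add: field_simps)
  hence "y * exp (- y / l) \<le> x * exp ((y - x) / l) * exp (- y / l)" by (intro mult_right_mono) auto
  also have "\<dots> = x * exp (- x / l)" by (simp add: mult.assoc exp_add[symmetric] diff_divide_distrib)
  finally show ?thesis .
qed

theorem theorem4p3:
  fixes n T :: nat
    and D :: "'inst set"
    and C :: "'inst \<Rightarrow> nat list set"
    and f :: "nat list \<Rightarrow> 'inst \<Rightarrow> real"
    and p :: "'th \<Rightarrow> 'inst \<Rightarrow> nat list \<Rightarrow> real"
    and c :: real
    and thetastar :: "real \<Rightarrow> 'th"
    and P :: 'inst and eps lam :: real
  assumes C_sub: "\<And>Q. Q \<in> D \<Longrightarrow> C Q \<subseteq> routes n T"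
    and C_ne: "\<And>Q. Q \<in> D \<Longrightarrow> C Q \<noteq> {}"
    and p_distr: "\<And>th Q. Q \<in> D \<Longrightarrow> is_distr (routes n T) (p th Q)"
    and delta_bound: "\<And>l. l > 0 \<Longrightarrow>
        (INF th. SUP Q\<in>D. KL (routes n T) (p th Q) (gibbs l (\<lambda>x. f x Q) (C Q))) \<le> ereal (c / l)"
    and thetastar_min: "\<And>l. l > 0 \<Longrightarrow>
        (SUP Q\<in>D. KL (routes n T) (p (thetastar l) Q) (gibbs l (\<lambda>x. f x Q) (C Q)))
        = (INF th. SUP Q\<in>D. KL (routes n T) (p th Q) (gibbs l (\<lambda>x. f x Q) (C Q)))"
    and P_in: "P \<in> D"
    and nonopt_ne: "C P - optset (\<lambda>x. f x P) (C P) \<noteq> {}"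
    and eps_pos: "eps > 0"
    and lam_pos: "lam > 0"
    and lam_le: "lam \<le> gap (\<lambda>x. f x P) (C P)"
  shows "(\<Sum>x\<in>{x \<in> routes n T. f x P \<ge> fstar (\<lambda>x. f x P) (C P) + eps}. p (thetastar lam) P x)
     \<le> real (card (C P)) * gap (\<lambda>x. f x P) (C P) * exp (- gap (\<lambda>x. f x P) (C P) / lam)
         / (real (card (optset (\<lambda>x. f x P) (C P))) * max eps (gap (\<lambda>x. f x P) (C P)))
       + sqrt (c / (2 * lam))"
proof -
  define S where "S = routes n T"
  define fP where "fP = (\<lambda>x. f x P)"
  define Cp where "Cp = C P"
  define fs where "fs = fstar fP Cp"
  define Op where "Op = optset fP Cp"
  define Dl where "Dl = gap fP Cp"
  define pp where "pp = p (thetastar lam) P"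
  define qq where "qq = gibbs lam fP Cp"
  define Z where "Z = (\<Sum>y\<in>Cp. exp (- (fP y - fs) / lam))"
  define m where "m = max eps Dl"
  have finS: "finite S" unfolding S_def routes_def
    using finite_lists_length_eq[of "{0..n}" T] by (simp add: conj_commute)
  have CS: "Cp \<subseteq> S" unfolding Cp_def S_def using C_sub P_in by simp
  have finC: "finite Cp" using finS CS finite_subset by blast
  have Cne: "Cp \<noteq> {}" unfolding Cp_def using C_ne P_in by simp
  have fs_in: "fs \<in> fP ` Cp" unfolding fs_def fstar_def using finC Cne by (intro Min_in) auto
  have fs_le: "fs \<le> fP x" if "x \<in> Cp" for x unfolding fs_def fstar_def using finC that by (intro Min_le) auto
  have One: "Op \<noteq> {}" using fs_in unfolding Op_def optset_def fs_def by auto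
  have OC: "Op \<subseteq> Cp" unfolding Op_def optset_def by auto
  have finO: "finite Op" using finC OC finite_subset by blast
  have Dl_pos: "0 < Dl" using lam_pos lam_le unfolding Dl_def fP_def Cp_def by simp
  have Dl_eq: "Dl = Min (fP ` (Cp - Op)) - fs" unfolding Dl_def gap_def Op_def fs_def by simp
  have ZO: "real (card Op) \<le> Z"
  proof -
    have "real (card Op) = (\<Sum>y\<in>Op. exp (- (fP y - fs) / lam))"
      unfolding Op_def optset_def fs_def by simp
    also have "\<dots> \<le> Z" unfolding Z_def using finC OC by (intro sum_mono2) auto
    finally show ?thesis .
  qed
  have cardO: "0 < real (card Op)" using finO One by (simp add: card_gt_0_iff)
  have Zpos: "0 < Z" using ZO cardO by linarith
  have qq_eq: "qq x = (if x \<in> Cp then exp (- (fP x - fs) / lam) / Z else 0)" for x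
    unfolding qq_def gibbs_def Z_def fs_def by simp
  have qq_nn: "0 \<le> qq x" for x using Zpos unfolding qq_eq by simp
  have qq_sum: "(\<Sum>x\<in>S. qq x) = 1"
  proof -
    have "(\<Sum>x\<in>S. qq x) = (\<Sum>x\<in>Cp. qq x)"
      using finS CS by (intro sum.mono_neutral_right) (auto simp: qq_eq)
    also have "\<dots> = (\<Sum>x\<in>Cp. exp (- (fP x - fs) / lam) / Z)" by (simp add: qq_eq)
    also have "\<dots> = 1" using Zpos by (simp add: sum_divide_distrib[symmetric] Z_def)
    finally show ?thesis .
  qed
  have pdist: "is_distr S pp" unfolding pp_def S_def using p_distr P_in by simp
  have pp_nn: "\<And>x. x \<in> S \<Longrightarrow> 0 \<le> pp x" and pp_sum: "(\<Sum>x\<in>S. pp x) = 1"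
    using pdist unfolding is_distr_def by auto
  have KLb: "KL S pp qq \<le> ereal (c / lam)"
  proof -
    have "KL S pp qq \<le> (SUP Q\<in>D. KL (routes n T) (p (thetastar lam) Q) (gibbs lam (\<lambda>x. f x Q) (C Q)))"
      unfolding S_def pp_def qq_def fP_def Cp_def using P_in by (intro SUP_upper) auto
    also have "\<dots> \<le> ereal (c / lam)" using thetastar_min[OF lam_pos] delta_bound[OF lam_pos] by simp
    finally show ?thesis .
  qed
  define K where "K = (\<Sum>x\<in>{x\<in>S. pp x \<noteq> 0}. pp x * ln (pp x / qq x))"
  have supp: "\<forall>x\<in>S. pp x \<noteq> 0 \<longrightarrow> qq x \<noteq> 0"
  proof (rule ccontr)
    assume "\<not> ?thesis"
    hence "KL S pp qq = \<infinity>" unfolding KL_def by auto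
    thus False using KLb by simp
  qed
  have Kb: "K \<le> c / lam" using KLb supp unfolding KL_def K_def by simp
  define A where "A = {x \<in> S. fs + eps \<le> fP x}"
  define a where "a = (\<Sum>x\<in>A. pp x)"
  define b where "b = (\<Sum>x\<in>A. qq x)"
  have AS: "A \<subseteq> S" unfolding A_def by auto
  have finA: "finite A" using finS AS finite_subset by blast
  have a_nn: "0 \<le> a" unfolding a_def using AS pp_nn by (intro sum_nonneg) auto
  have b_nn: "0 \<le> b" unfolding b_def using qq_nn by (intro sum_nonneg) auto
  have ac: "(\<Sum>x\<in>S - A. pp x) = 1 - a" unfolding a_def using finS AS pp_sum by (simp add: sum_diff)
  have bc: "(\<Sum>x\<in>S - A. qq x) = 1 - b" unfolding b_def using finS AS qq_sum by (simp add: sum_diff)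
  have ac_nn: "0 \<le> 1 - a" unfolding ac[symmetric] using pp_nn by (intro sum_nonneg) auto
  have bc_nn: "0 \<le> 1 - b" unfolding bc[symmetric] using qq_nn by (intro sum_nonneg) auto
  have pos_trans: "0 < (\<Sum>x\<in>B. qq x)" if B: "B \<subseteq> S" "0 < (\<Sum>x\<in>B. pp x)" for B
  proof -
    have finB: "finite B" using B finS finite_subset by blast
    obtain x where x: "x \<in> B" "pp x \<noteq> 0"
      using B(2) by (metis (mono_tags, lifting) less_irrefl sum.neutral)
    hence "qq x \<noteq> 0" using supp B by auto
    hence "0 < qq x" using qq_nn[of x] by simp
    moreover have "qq x \<le> (\<Sum>x\<in>B. qq x)" using finB x qq_nn by (intro member_le_sum) auto
    ultimately show ?thesis by simp
  qed
  have split: "K = (\<Sum>x\<in>{x\<in>A. pp x \<noteq> 0}. pp x * ln (pp x / qq x))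
                 + (\<Sum>x\<in>{x\<in>S - A. pp x \<noteq> 0}. pp x * ln (pp x / qq x))"
  proof -
    have "{x\<in>S. pp x \<noteq> 0} = {x\<in>A. pp x \<noteq> 0} \<union> {x\<in>S - A. pp x \<noteq> 0}" using AS by auto
    thus ?thesis unfolding K_def using finS finA by (simp add: sum.union_disjoint[symmetric]) (auto intro: sum.union_disjoint)
  qed
  have l1: "a * ln (a / b) \<le> (\<Sum>x\<in>{x\<in>A. pp x \<noteq> 0}. pp x * ln (pp x / qq x))"
    unfolding a_def b_def using finA AS pp_nn qq_nn supp by (intro logsum) auto
  have l2: "(1 - a) * ln ((1 - a) / (1 - b)) \<le> (\<Sum>x\<in>{x\<in>S - A. pp x \<noteq> 0}. pp x * ln (pp x / qq x))"
    unfolding ac[symmetric] bc[symmetric] using finS pp_nn qq_nn supp by (intro logsum) auto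
  have "2 * (a - b)^2 \<le> a * ln (a / b) + (1 - a) * ln ((1 - a) / (1 - b))"
  proof (rule binpinsker)
    show "0 < a \<Longrightarrow> 0 < b" using pos_trans[OF AS] unfolding a_def b_def by simp
    show "a < 1 \<Longrightarrow> b < 1" using pos_trans[of "S - A"] ac bc by simp
  qed (use a_nn b_nn ac_nn bc_nn in auto)
  hence "2 * (a - b)^2 \<le> c / lam" using l1 l2 split Kb by linarith
  hence "(a - b)^2 \<le> c / (2 * lam)" by simp
  hence "sqrt ((a - b)^2) \<le> sqrt (c / (2 * lam))" by (rule real_sqrt_le_mono)
  hence sq: "a - b \<le> sqrt (c / (2 * lam))" by simp
  define E where "E = exp (- m / lam)"
  have gapx: "m \<le> fP x - fs" if x: "x \<in> A" "x \<in> Cp" for x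
  proof -
    have "x \<notin> Op" using x eps_pos unfolding A_def Op_def optset_def fs_def by auto
    hence "x \<in> Cp - Op" using x by simp
    hence "Min (fP ` (Cp - Op)) \<le> fP x" using finC by (intro Min_le) auto
    hence "Dl \<le> fP x - fs" using Dl_eq by simp
    moreover have "eps \<le> fP x - fs" using x unfolding A_def by simp
    ultimately show ?thesis unfolding m_def by simp
  qed
  have "b = (\<Sum>x\<in>A \<inter> Cp. qq x)" unfolding b_def using finA
    by (intro sum.mono_neutral_right) (auto simp: qq_eq)
  also have "\<dots> \<le> (\<Sum>x\<in>A \<inter> Cp. E / Z)"
  proof (rule sum_mono)
    fix x assume x: "x \<in> A \<inter> Cp"
    have "m / lam \<le> (fP x - fs) / lam" using gapx[of x] x lam_pos by (intro divide_right_mono) auto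
    moreover have "(fs - fP x) / lam = - ((fP x - fs) / lam)" by (metis minus_diff_eq minus_divide_left)
    ultimately have "exp (- (fP x - fs) / lam) \<le> E" unfolding E_def by simp
    thus "qq x \<le> E / Z" using x Zpos by (simp add: qq_eq divide_right_mono)
  qed
  also have "\<dots> = real (card (A \<inter> Cp)) * E / Z" by simp
  also have "\<dots> \<le> real (card Cp) * E / Z" using finC Zpos
    by (intro divide_right_mono mult_right_mono) (auto simp: E_def card_mono)
  also have "\<dots> \<le> real (card Cp) * E / real (card Op)" using Zpos ZO cardO
    by (intro divide_left_mono) (auto simp: E_def)
  also have "\<dots> \<le> real (card Cp) * Dl * exp (- Dl / lam) / (real (card Op) * m)"
  proof -
    have mpos: "0 < m" using Dl_pos unfolding m_def by simp
    have "m * E \<le> Dl * exp (- Dl / lam)" unfolding E_def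
      using L3[of lam Dl m] lam_pos lam_le unfolding m_def Dl_def fP_def Cp_def by simp
    hence "E \<le> Dl * exp (- Dl / lam) / m" using mpos by (simp add: field_simps)
    hence "real (card Cp) * E \<le> real (card Cp) * (Dl * exp (- Dl / lam) / m)" by (intro mult_left_mono) auto
    hence "real (card Cp) * E / real (card Op) \<le> real (card Cp) * (Dl * exp (- Dl / lam) / m) / real (card Op)"
      using cardO by (intro divide_right_mono) auto
    thus ?thesis by (simp add: field_simps)
  qed
  finally have bb: "b \<le> real (card Cp) * Dl * exp (- Dl / lam) / (real (card Op) * m)" .
  have "a \<le> real (card Cp) * Dl * exp (- Dl / lam) / (real (card Op) * m) + sqrt (c / (2 * lam))"
    using sq bb by linarith
  thus ?thesis unfolding a_def A_def S_def pp_def fs_def fP_def Cp_def Op_def Dl_def m_def by simp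
qed

end
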